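(* Let $A$ be a Büchi automaton over $2^{AP}$, $\varphi$ an LTL formula, and $A'$ a Büchi automaton with $\mathcal{L}(A')=\mathcal{L}(A)\cap\{\pi\mid\pi\models\varphi\}$. Then $\mathrm{Cn}_{LTL}(\mathrm{supp}(A)\cup\{\varphi\})=\mathrm{supp}(A')$.
   Context: Fix a finite nonempty $AP$. LTL formulae $\varphi::=\bot\mid p\mid\neg\varphi\mid\varphi\lor\varphi\mid X\varphi\mid\varphi U\varphi$ with the standard semantics on traces $\pi\in(2^{AP})^\omega$. Kripke structures $M=(S,I,T,\lambda)$ (finite $S$, nonempty $I$, left-total $T$, $\lambda:S\to 2^{AP}$); $M\models\varphi$ iff all traces of $M$ satisfy $\varphi$; $\mathrm{Cn}_{LTL}(X)$ = formulae satisfied by every Kripke structure satisfying all of $X$. Büchi automata over alphabet $2^{AP}$ accept infinite words via runs from initial states visiting recurrence states infinitely often; $\mathcal{L}(A)$ is the language. $\mathrm{supp}(A):=\{\psi\mid\pi\models\psi\ \forall\pi\in\mathcal{L}(A)\}$. *)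

theory Defs
  imports Main
begin

datatype 'a ltl =
    LBot
  | LProp 'a
  | LNot "'a ltl"
  | LOr "'a ltl" "'a ltl"
  | LNext "'a ltl"
  | LUntil "'a ltl" "'a ltl"

type_synonym 'a trace = "nat \<Rightarrow> 'a set"

definition suffix :: "nat \<Rightarrow> 'a trace \<Rightarrow> 'a trace" where
  "suffix k \<pi> = (\<lambda>i. \<pi> (i + k))"

fun ltl_sat :: "'a trace \<Rightarrow> 'a ltl \<Rightarrow> bool" where
  "ltl_sat \<pi> LBot = False"
| "ltl_sat \<pi> (LProp p) = (p \<in> \<pi> 0)"
| "ltl_sat \<pi> (LNot \<phi>) = (\<not> ltl_sat \<pi> \<phi>)"
| "ltl_sat \<pi> (LOr \<phi> \<psi>) = (ltl_sat \<pi> \<phi> \<or> ltl_sat \<pi> \<psi>)"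
| "ltl_sat \<pi> (LNext \<phi>) = ltl_sat (suffix 1 \<pi>) \<phi>"
| "ltl_sat \<pi> (LUntil \<phi> \<psi>) =
     (\<exists>k. ltl_sat (suffix k \<pi>) \<psi> \<and> (\<forall>j<k. ltl_sat (suffix j \<pi>) \<phi>))"

record ('s, 'a) kripke =
  kS :: "'s set"
  kI :: "'s set"
  kT :: "('s \<times> 's) set"
  kL :: "'s \<Rightarrow> 'a set"

definition is_kripke :: "('s, 'a) kripke \<Rightarrow> bool" where
  "is_kripke M \<longleftrightarrow> finite (kS M) \<and> kI M \<noteq> {} \<and> kI M \<subseteq> kS M
     \<and> kT M \<subseteq> kS M \<times> kS M \<and> (\<forall>s\<in>kS M. \<exists>t. (s, t) \<in> kT M)"

definition kripke_traces :: "('s, 'a) kripke \<Rightarrow> 'a trace set" where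
  "kripke_traces M = {\<lambda>i. kL M (\<rho> i) | \<rho>.
      \<rho> 0 \<in> kI M \<and> (\<forall>i. (\<rho> i, \<rho> (Suc i)) \<in> kT M)}"

definition kripke_models :: "('s, 'a) kripke \<Rightarrow> 'a ltl \<Rightarrow> bool" where
  "kripke_models M \<phi> \<longleftrightarrow> (\<forall>\<pi>\<in>kripke_traces M. ltl_sat \<pi> \<phi>)"

text \<open>Every finite Kripke
  structure is isomorphic to one whose states are natural numbers, so
  quantifying over structures with state type nat covers all of them.\<close>
definition Cn_LTL :: "'a ltl set \<Rightarrow> 'a ltl set" where
  "Cn_LTL X = {\<psi>. \<forall>M :: (nat, 'a) kripke. is_kripke M \<longrightarrow>
      (\<forall>\<phi>\<in>X. kripke_models M \<phi>) \<longrightarrow> kripke_models M \<psi>}"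

record ('q, 'a) buchi =
  bQ :: "'q set"
  bInit :: "'q set"
  bDelta :: "('q \<times> 'a set \<times> 'q) set"
  bAcc :: "'q set"

definition is_buchi :: "('q, 'a) buchi \<Rightarrow> bool" where
  "is_buchi A \<longleftrightarrow> finite (bQ A) \<and> bInit A \<subseteq> bQ A \<and> bAcc A \<subseteq> bQ A
     \<and> (\<forall>(q, a, q') \<in> bDelta A. q \<in> bQ A \<and> q' \<in> bQ A)"

definition buchi_lang :: "('q, 'a) buchi \<Rightarrow> 'a trace set" where
  "buchi_lang A = {w. \<exists>r. r 0 \<in> bInit A \<and> (\<forall>i. (r i, w i, r (Suc i)) \<in> bDelta A)
      \<and> infinite {i. r i \<in> bAcc A}}"

definition supp :: "('q, 'a) buchi \<Rightarrow> 'a ltl set" where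
  "supp A = {\<psi>. \<forall>\<pi>\<in>buchi_lang A. ltl_sat \<pi> \<psi>}"

end

theory Submission
  imports Defs "HOL-Library.Infinite_Set"
begin

definition holds :: "'a trace \<Rightarrow> nat \<Rightarrow> 'a ltl \<Rightarrow> bool" where
  "holds w n \<chi> = ltl_sat (suffix n w) \<chi>"

lemma suffix_suffix: "suffix k (suffix m w) = suffix (k + m) w"
  by (auto simp: suffix_def add.assoc)

lemma sat_holds: "ltl_sat w \<chi> = holds w 0 \<chi>"
  by (simp add: holds_def suffix_def)

lemma holds_simps[simp]:
  "holds w n LBot = False"
  "holds w n (LProp p) = (p \<in> w n)"
  "holds w n (LNot \<chi>) = (\<not> holds w n \<chi>)"
  "holds w n (LOr a b) = (holds w n a \<or> holds w n b)"
  "holds w n (LNext \<chi>) = holds w (Suc n) \<chi>"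
  "holds w n (LUntil a b) = (\<exists>k. holds w (n + k) b \<and> (\<forall>l<k. holds w (n + l) a))"
  by (simp_all add: holds_def suffix_suffix add.commute) (simp add: suffix_def)

lemma holds_until_unfold:
  "holds w n (LUntil a b) = (holds w n b \<or> (holds w n a \<and> holds w (Suc n) (LUntil a b)))"
proof
  assume "holds w n (LUntil a b)"
  then obtain k where k: "holds w (n + k) b" "\<forall>l<k. holds w (n + l) a" by auto
  show "holds w n b \<or> (holds w n a \<and> holds w (Suc n) (LUntil a b))"
  proof (cases k)
    case 0 then show ?thesis using k by simp
  next
    case (Suc k')
    have "holds w n a" using k Suc by (metis add_0_right zero_less_Suc)
    moreover have "holds w (Suc n + k') b" using k Suc by simp
    moreover have "\<forall>l<k'. holds w (Suc n + l) a" using k Suc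
      by (metis Suc_less_eq add_Suc_shift add_Suc_right)
    ultimately show ?thesis by auto
  qed
next
  assume "holds w n b \<or> (holds w n a \<and> holds w (Suc n) (LUntil a b))"
  then show "holds w n (LUntil a b)"
  proof
    assume "holds w n b" then show ?thesis by (auto intro: exI[of _ 0])
  next
    assume h: "holds w n a \<and> holds w (Suc n) (LUntil a b)"
    then obtain k where k: "holds w (Suc n + k) b" "\<forall>l<k. holds w (Suc n + l) a" by auto
    have "holds w (n + Suc k) b" using k by simp
    moreover have "\<forall>l<Suc k. holds w (n + l) a"
    proof (intro allI impI)
      fix l assume "l < Suc k"
      then show "holds w (n + l) a" using k h by (cases l) auto
    qed
    ultimately show ?thesis by (simp only: holds_simps) blast
  qed
qed

fun subf :: "'a ltl \<Rightarrow> 'a ltl set" where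
  "subf LBot = {LBot}"
| "subf (LProp p) = {LProp p}"
| "subf (LNot a) = insert (LNot a) (subf a)"
| "subf (LOr a b) = insert (LOr a b) (subf a \<union> subf b)"
| "subf (LNext a) = insert (LNext a) (subf a)"
| "subf (LUntil a b) = insert (LUntil a b) (subf a \<union> subf b)"

lemma finite_subf: "finite (subf \<chi>)"
  by (induction \<chi>) auto

lemma self_subf: "\<chi> \<in> subf \<chi>"
  by (cases \<chi>) auto

lemma subf_trans: "\<chi>' \<in> subf \<chi> \<Longrightarrow> subf \<chi>' \<subseteq> subf \<chi>"
  by (induction \<chi>) auto

lemma truth:
  fixes w :: "'a trace" and f :: "nat \<Rightarrow> nat"
  assumes H1: "\<forall>n \<chi>. \<chi> \<in> subf \<psi> \<longrightarrow> (holds w (f (Suc n)) \<chi> \<longleftrightarrow> holds w (Suc (f n)) \<chi>)"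
    and H2: "\<forall>n \<alpha> \<beta>. LUntil \<alpha> \<beta> \<in> subf \<psi> \<longrightarrow> holds w (f n) (LUntil \<alpha> \<beta>) \<longrightarrow> (\<exists>m\<ge>n. holds w (f m) \<beta>)"
  shows "subf \<chi> \<subseteq> subf \<psi> \<Longrightarrow> holds (\<lambda>x. w (f x)) n \<chi> \<longleftrightarrow> holds w (f n) \<chi>"
proof (induction \<chi> arbitrary: n)
  case (LNext a)
  have sub: "LNext a \<in> subf \<psi>" using LNext.prems by auto
  have asub: "a \<in> subf \<psi>" using LNext.prems self_subf by auto
  have "holds (\<lambda>x. w (f x)) n (LNext a) = holds (\<lambda>x. w (f x)) (Suc n) a" by simp
  also have "\<dots> = holds w (f (Suc n)) a" using LNext.IH[of "Suc n"] LNext.prems by (simp add: comp_def)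
  also have "\<dots> = holds w (Suc (f n)) a" using H1 asub by blast
  finally show ?case by (simp add: comp_def)
next
  case (LUntil a b)
  let ?U = "LUntil a b"
  have U: "?U \<in> subf \<psi>" using LUntil.prems by auto
  have IHa: "\<And>n. holds (\<lambda>x. w (f x)) n a \<longleftrightarrow> holds w (f n) a" using LUntil by auto
  have IHb: "\<And>n. holds (\<lambda>x. w (f x)) n b \<longleftrightarrow> holds w (f n) b" using LUntil by auto
  have shift: "\<And>n. holds w (f (Suc n)) ?U \<longleftrightarrow> holds w (Suc (f n)) ?U" using H1 U by blast
  show ?case
  proof
    assume "holds (\<lambda>x. w (f x)) n ?U"
    then obtain k where k: "holds (\<lambda>x. w (f x)) (n + k) b" "\<forall>l<k. holds (\<lambda>x. w (f x)) (n + l) a" by auto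
    have "\<And>n. holds (\<lambda>x. w (f x)) (n + k) b \<Longrightarrow> \<forall>l<k. holds (\<lambda>x. w (f x)) (n + l) a \<Longrightarrow> holds w (f n) ?U"
    proof (induction k)
      case 0 then show ?case using IHb holds_until_unfold by (metis add_0_right)
    next
      case (Suc k n)
      have "holds (\<lambda>x. w (f x)) (Suc n + k) b" using Suc.prems by simp
      moreover have "\<forall>l<k. holds (\<lambda>x. w (f x)) (Suc n + l) a" using Suc.prems by auto
      ultimately have "holds w (f (Suc n)) ?U" using Suc.IH by blast
      then have "holds w (Suc (f n)) ?U" using shift by blast
      moreover have "holds w (f n) a" using Suc.prems IHa by (metis add_0_right zero_less_Suc)
      ultimately show ?case using holds_until_unfold by blast
    qed
    then show "holds w (f n) ?U" using k by blast
  next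
    assume hU: "holds w (f n) ?U"
    then have ex: "\<exists>m. n \<le> m \<and> holds w (f m) b" using H2 U by blast
    define m0 where "m0 = (LEAST m. n \<le> m \<and> holds w (f m) b)"
    have m0: "n \<le> m0" "holds w (f m0) b" using LeastI_ex[OF ex] unfolding m0_def by auto
    have nb: "\<And>m. n \<le> m \<Longrightarrow> m < m0 \<Longrightarrow> \<not> holds w (f m) b"
      unfolding m0_def using not_less_Least by blast
    have inv: "\<And>d. n + d \<le> m0 \<Longrightarrow> holds w (f (n + d)) ?U"
    proof -
      fix d show "n + d \<le> m0 \<Longrightarrow> holds w (f (n + d)) ?U"
      proof (induction d)
        case 0 then show ?case using hU by simp
      next
        case (Suc d)
        have "holds w (f (n + d)) ?U" using Suc by simp
        moreover have "\<not> holds w (f (n + d)) b" using nb Suc.prems by simp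
        ultimately have "holds w (Suc (f (n + d))) ?U" using holds_until_unfold by blast
        then show ?case using shift by simp
      qed
    qed
    have aa: "\<And>l. l < m0 - n \<Longrightarrow> holds w (f (n + l)) a"
    proof -
      fix l assume "l < m0 - n"
      then have "holds w (f (n + l)) ?U" "\<not> holds w (f (n + l)) b" using inv nb by auto
      then show "holds w (f (n + l)) a" using holds_until_unfold by blast
    qed
    have "holds (\<lambda>x. w (f x)) (n + (m0 - n)) b" using IHb m0 by simp
    moreover have "\<forall>l<m0 - n. holds (\<lambda>x. w (f x)) (n + l) a" using aa IHa by blast
    ultimately show "holds (\<lambda>x. w (f x)) n ?U" by auto
  qed
qed auto



definition lf :: "nat \<Rightarrow> nat \<Rightarrow> nat \<Rightarrow> nat" where
  "lf i j n = (if n < i then n else i + (n - i) mod (j - i))"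

lemma lf_lt: assumes "i < j" shows "lf i j n < j"
proof -
  define m where "m = (n - i) mod (j - i)"
  have "m < j - i" using assms unfolding m_def by simp
  moreover have "lf i j n = (if n < i then n else i + m)" unfolding lf_def m_def by simp
  ultimately show ?thesis using assms by auto
qed

lemma mod_aux: "q < (d::nat) \<Longrightarrow> (d * t + q) mod d = q"
  by (metis add.commute mod_less mod_mult_self1 mult.commute)

lemma mod_aux2: "(q + (d::nat)) mod d = q mod d"
  by simp

lemma lf_0: "lf i j 0 = 0"
  unfolding lf_def by auto

lemma lf_ge: "i \<le> n \<Longrightarrow> i \<le> lf i j n"
  unfolding lf_def by auto

lemma lf_small: "n < i \<Longrightarrow> lf i j n = n"
  unfolding lf_def by auto

lemma lf_Suc: assumes "i < j"
  shows "lf i j (Suc n) = (if Suc (lf i j n) < j then Suc (lf i j n) else i)"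
proof (cases "Suc n < i")
  case True then show ?thesis using assms by (simp add: lf_def)
next
  case False
  show ?thesis
  proof (cases "n < i")
    case True
    then have "Suc n = i" using False by simp
    then show ?thesis using assms True by (simp add: lf_def)
  next
    case nl: False
    define m where "m = (n - i) mod (j - i)"
    have mlt: "m < j - i" using assms unfolding m_def by simp
    have ln: "lf i j n = i + m" using nl unfolding lf_def m_def by simp
    have "Suc n - i = Suc (n - i)" using nl by simp
    then have ls: "lf i j (Suc n) = i + (if Suc m = j - i then 0 else Suc m)"
      using nl unfolding lf_def m_def by (simp add: mod_Suc)
    show ?thesis unfolding ls ln using mlt assms by auto
  qed
qed

lemma lf_hit: assumes "i \<le> p" "p < j"
  shows "lf i j (i + (j - i) * t + (p - i)) = p"
proof -
  have "((j - i) * t + (p - i)) mod (j - i) = p - i"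
    using assms by (intro mod_aux) simp
  then show ?thesis using assms by (simp add: lf_def)
qed

lemma lf_per: assumes "i < j" "i \<le> n" shows "lf i j (n + (j - i)) = lf i j n"
proof -
  have "n + (j - i) - i = (n - i) + (j - i)" using assms by simp
  then have "(n + (j - i) - i) mod (j - i) = (n - i) mod (j - i)" using mod_aux2 by simp
  moreover have "\<not> n + (j - i) < i" using assms by simp
  ultimately show ?thesis using assms unfolding lf_def by simp
qed



lemma lasso_exists:
  fixes r :: "nat \<Rightarrow> 'q" and w :: "'a trace"
  assumes "finite Q" "\<forall>n. r n \<in> Q" "infinite {n. r n \<in> Acc}"
  shows "\<exists>i j. i < j \<and> r i = r j \<and> (\<exists>k. i \<le> k \<and> k < j \<and> r k \<in> Acc)
     \<and> (\<forall>\<chi>\<in>subf \<psi>. holds w i \<chi> \<longleftrightarrow> holds w j \<chi>)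
     \<and> (\<forall>\<alpha> \<beta>. LUntil \<alpha> \<beta> \<in> subf \<psi> \<longrightarrow>
           (\<exists>p. i \<le> p \<and> p < j \<and> holds w p \<beta>) \<or> (\<forall>p\<ge>i. \<not> holds w p \<beta>))"
proof -
  define T where "T n = (r n, {\<chi> \<in> subf \<psi>. holds w n \<chi>})" for n
  have finT: "finite (range T)"
  proof (rule finite_subset)
    show "range T \<subseteq> Q \<times> Pow (subf \<psi>)" using assms(2) by (auto simp: T_def)
    show "finite (Q \<times> Pow (subf \<psi>))" using assms(1) finite_subf by auto
  qed
  define B where "B = {\<beta>. \<exists>\<alpha>. LUntil \<alpha> \<beta> \<in> subf \<psi>}"
  have finB: "finite B"
  proof (rule finite_subset)
    show "B \<subseteq> subf \<psi>" unfolding B_def using subf_trans self_subf by fastforce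
  qed (rule finite_subf)
  define Bf where "Bf = {\<beta>\<in>B. finite {p. holds w p \<beta>}}"
  define Bi where "Bi = B - Bf"
  have "finite Bf" using finB unfolding Bf_def by simp
  then have "finite (\<Union>\<beta>\<in>Bf. {p. holds w p \<beta>})" unfolding Bf_def by (intro finite_UN_I) auto
  then obtain N where N0: "(\<Union>\<beta>\<in>Bf. {p. holds w p \<beta>}) \<subseteq> {..<N}"
    using finite_nat_bounded by meson
  have N: "\<And>\<beta> p. \<beta> \<in> Bf \<Longrightarrow> holds w p \<beta> \<Longrightarrow> p < N" using N0 by blast
  have "infinite {N..}" by (simp add: infinite_Ici)
  moreover have "finite (T ` {N..})" using finT by (rule finite_subset[rotated]) auto
  ultimately obtain a0 where a0: "a0 \<in> {N..}" "infinite {a\<in>{N..}. T a = T a0}"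
    using pigeonhole_infinite by blast
  define i where "i = a0"
  obtain k where k: "k \<ge> i" "r k \<in> Acc" using assms(3) unfolding infinite_nat_iff_unbounded_le by blast
  have "\<forall>\<beta>\<in>Bi. \<exists>p. i \<le> p \<and> holds w p \<beta>"
    using Bi_def Bf_def infinite_nat_iff_unbounded_le by auto
  then obtain g where g: "\<And>\<beta>. \<beta> \<in> Bi \<Longrightarrow> i \<le> g \<beta> \<and> holds w (g \<beta>) \<beta>" by metis
  have finBi: "finite Bi" using finB Bi_def by auto
  define M where "M = Suc (Max (insert k (g ` Bi)))"
  obtain j where j: "j \<ge> M" "j \<in> {a\<in>{N..}. T a = T a0}"
    using a0(2) unfolding infinite_nat_iff_unbounded_le by blast
  have kM: "k < M" unfolding M_def using finBi by (simp add: le_imp_less_Suc)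
  have gM: "\<And>\<beta>. \<beta> \<in> Bi \<Longrightarrow> g \<beta> < M" unfolding M_def using finBi by (simp add: le_imp_less_Suc)
  have ij: "i < j" using k kM j by simp
  have Tij: "T i = T j" using j i_def by simp
  have rij: "r i = r j" using Tij by (simp add: T_def)
  have eqv: "\<forall>\<chi>\<in>subf \<psi>. holds w i \<chi> \<longleftrightarrow> holds w j \<chi>"
  proof
    fix \<chi> assume "\<chi> \<in> subf \<psi>"
    moreover have "{\<chi> \<in> subf \<psi>. holds w i \<chi>} = {\<chi> \<in> subf \<psi>. holds w j \<chi>}" using Tij by (simp add: T_def)
    ultimately show "holds w i \<chi> \<longleftrightarrow> holds w j \<chi>" by blast
  qed
  have unt: "\<forall>\<alpha> \<beta>. LUntil \<alpha> \<beta> \<in> subf \<psi> \<longrightarrow>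
           (\<exists>p. i \<le> p \<and> p < j \<and> holds w p \<beta>) \<or> (\<forall>p\<ge>i. \<not> holds w p \<beta>)"
  proof (intro allI impI)
    fix \<alpha> \<beta> assume "LUntil \<alpha> \<beta> \<in> subf \<psi>"
    then have "\<beta> \<in> B" unfolding B_def by blast
    show "(\<exists>p. i \<le> p \<and> p < j \<and> holds w p \<beta>) \<or> (\<forall>p\<ge>i. \<not> holds w p \<beta>)"
    proof (cases "\<beta> \<in> Bf")
      case True
      then show ?thesis using N a0 i_def by fastforce
    next
      case False
      then have "\<beta> \<in> Bi" using \<open>\<beta> \<in> B\<close> Bi_def by auto
      then show ?thesis using g gM j by (meson less_le_trans)
    qed
  qed
  have kj: "k < j" using kM j(1) by simp
  show ?thesis using ij rij eqv unt k kj by blast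
qed



lemma lasso:
  fixes r :: "nat \<Rightarrow> 'q" and w :: "'a trace"
  assumes "finite Q" "\<forall>n. r n \<in> Q" "infinite {n. r n \<in> Acc}"
    and R: "\<forall>n. R (r n) (w n) (r (Suc n))"
  shows "\<exists>i j. i < j \<and> (\<forall>n. R (r (lf i j n)) (w (lf i j n)) (r (lf i j (Suc n))))
     \<and> infinite {n. r (lf i j n) \<in> Acc}
     \<and> (ltl_sat (\<lambda>x. w (lf i j x)) \<psi> \<longleftrightarrow> ltl_sat w \<psi>)"
proof -
  obtain i j k where ij: "i < j" and rij: "r i = r j" and k: "i \<le> k" "k < j" "r k \<in> Acc"
    and eqv: "\<forall>\<chi>\<in>subf \<psi>. holds w i \<chi> \<longleftrightarrow> holds w j \<chi>"
    and unt: "\<forall>\<alpha> \<beta>. LUntil \<alpha> \<beta> \<in> subf \<psi> \<longrightarrow>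
           (\<exists>p. i \<le> p \<and> p < j \<and> holds w p \<beta>) \<or> (\<forall>p\<ge>i. \<not> holds w p \<beta>)"
    using lasso_exists[OF assms(1-3), where w=w and \<psi>=\<psi>] by blast
  let ?f = "lf i j"
  have step: "\<And>n. ?f (Suc n) = Suc (?f n) \<or> (?f (Suc n) = i \<and> Suc (?f n) = j)"
  proof -
    fix n
    show "?f (Suc n) = Suc (?f n) \<or> (?f (Suc n) = i \<and> Suc (?f n) = j)"
      using lf_Suc[OF ij, of n] lf_lt[OF ij, of n] by (cases "Suc (?f n) < j") auto
  qed
  have H1: "\<forall>n \<chi>. \<chi> \<in> subf \<psi> \<longrightarrow> (holds w (?f (Suc n)) \<chi> \<longleftrightarrow> holds w (Suc (?f n)) \<chi>)"
  proof (intro allI impI)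
    fix n \<chi> assume "\<chi> \<in> subf \<psi>"
    then show "holds w (?f (Suc n)) \<chi> \<longleftrightarrow> holds w (Suc (?f n)) \<chi>"
      using step[of n] eqv by auto
  qed
  have H2: "\<forall>n \<alpha> \<beta>. LUntil \<alpha> \<beta> \<in> subf \<psi> \<longrightarrow> holds w (?f n) (LUntil \<alpha> \<beta>) \<longrightarrow> (\<exists>m\<ge>n. holds w (?f m) \<beta>)"
  proof (intro allI impI)
    fix n \<alpha> \<beta> assume U: "LUntil \<alpha> \<beta> \<in> subf \<psi>" and hU: "holds w (?f n) (LUntil \<alpha> \<beta>)"
    have "(\<exists>p. i \<le> p \<and> p < j \<and> holds w p \<beta>) \<or> (\<forall>p\<ge>i. \<not> holds w p \<beta>)"
      using unt U by blast
    then show "\<exists>m\<ge>n. holds w (?f m) \<beta>"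
    proof
      assume "\<exists>p. i \<le> p \<and> p < j \<and> holds w p \<beta>"
      then obtain p where p: "i \<le> p" "p < j" "holds w p \<beta>" by blast
      define m where "m = i + (j - i) * Suc n + (p - i)"
      have "?f m = p" unfolding m_def using lf_hit p by blast
      moreover have "n \<le> m"
      proof -
        have "n \<le> 1 * Suc n" by simp
        also have "\<dots> \<le> (j - i) * Suc n" by (rule mult_le_mono1) (use ij in simp)
        also have "\<dots> \<le> m" unfolding m_def by simp
        finally show ?thesis .
      qed
      ultimately show ?thesis using p by auto
    next
      assume nb: "\<forall>p\<ge>i. \<not> holds w p \<beta>"
      from hU obtain k where kk: "holds w (?f n + k) \<beta>" by auto
      have lt: "?f n + k < i" using nb kk by (meson not_less)
      then have "n < i" using lf_ge[of i n j] by (meson add_lessD1 not_less order_le_less_trans)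
      then have fn: "?f n = n" by (rule lf_small)
      have "?f (n + k) = n + k" using lt fn by (simp add: lf_small)
      then show ?thesis using kk fn by (metis le_add1)
    qed
  qed
  have tr: "holds (\<lambda>x. w (?f x)) 0 \<psi> \<longleftrightarrow> holds w (?f 0) \<psi>"
    using truth[OF H1 H2] by blast
  have sat: "ltl_sat (\<lambda>x. w (?f x)) \<psi> \<longleftrightarrow> ltl_sat w \<psi>"
    using tr by (simp add: sat_holds lf_0)
  have trans: "\<forall>n. R (r (?f n)) (w (?f n)) (r (?f (Suc n)))"
  proof
    fix n
    have "R (r (?f n)) (w (?f n)) (r (Suc (?f n)))" using R by blast
    then show "R (r (?f n)) (w (?f n)) (r (?f (Suc n)))" using step[of n] rij by auto
  qed
  have "infinite {n. r (?f n) \<in> Acc}"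
    unfolding infinite_nat_iff_unbounded_le
  proof
    fix m
    define n where "n = i + (j - i) * m + (k - i)"
    have "?f n = k" unfolding n_def using lf_hit k by blast
    moreover have "m \<le> n"
    proof -
      have "m \<le> 1 * m" by simp
      also have "\<dots> \<le> (j - i) * m" by (rule mult_le_mono1) (use ij in simp)
      also have "\<dots> \<le> n" unfolding n_def by simp
      finally show ?thesis .
    qed
    ultimately show "\<exists>n\<ge>m. n \<in> {n. r (?f n) \<in> Acc}" using k by auto
  qed
  then show ?thesis using ij trans sat by blast
qed



definition LAnd :: "'a ltl \<Rightarrow> 'a ltl \<Rightarrow> 'a ltl" where
  "LAnd a b = LNot (LOr (LNot a) (LNot b))"

lemma holds_LAnd[simp]: "holds w n (LAnd a b) = (holds w n a \<and> holds w n b)"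
  by (simp add: LAnd_def)

fun Conj :: "'a ltl list \<Rightarrow> 'a ltl" where
  "Conj [] = LNot LBot"
| "Conj (x # xs) = LAnd x (Conj xs)"

lemma holds_Conj[simp]: "holds w n (Conj xs) = (\<forall>x\<in>set xs. holds w n x)"
  by (induction xs) auto

fun Xs :: "nat \<Rightarrow> 'a ltl \<Rightarrow> 'a ltl" where
  "Xs 0 \<chi> = \<chi>"
| "Xs (Suc k) \<chi> = LNext (Xs k \<chi>)"

lemma holds_Xs[simp]: "holds w n (Xs k \<chi>) = holds w (n + k) \<chi>"
  by (induction k arbitrary: n) auto

definition Gl :: "'a ltl \<Rightarrow> 'a ltl" where
  "Gl \<chi> = LNot (LUntil (LNot LBot) (LNot \<chi>))"

lemma holds_Gl[simp]: "holds w n (Gl \<chi>) = (\<forall>k. holds w (n + k) \<chi>)"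
  by (auto simp: Gl_def)

definition allAP :: "'a::finite list" where
  "allAP = (SOME xs. set xs = UNIV)"

lemma set_allAP[simp]: "set allAP = UNIV"
  unfolding allAP_def using someI_ex[OF finite_list[OF finite_UNIV]] by blast

definition Letter :: "'a::finite set \<Rightarrow> 'a ltl" where
  "Letter a = Conj (map (\<lambda>q. if q \<in> a then LProp q else LNot (LProp q)) allAP)"

lemma holds_Letter[simp]: "holds w n (Letter a) = (w n = a)"
proof -
  have "holds w n (Letter a) = (\<forall>q\<in>set allAP. holds w n (if q \<in> a then LProp q else LNot (LProp q)))"
    unfolding Letter_def holds_Conj set_map by blast
  also have "\<dots> = (\<forall>q. holds w n (if q \<in> a then LProp q else LNot (LProp q)))"
    by simp
  also have "\<dots> = (\<forall>q. q \<in> a \<longleftrightarrow> q \<in> w n)" by (metis holds_simps(2,3))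
  also have "\<dots> = (w n = a)" by blast
  finally show ?thesis .
qed

definition Iff :: "'a ltl \<Rightarrow> 'a ltl \<Rightarrow> 'a ltl" where
  "Iff a b = LOr (LAnd a b) (LAnd (LNot a) (LNot b))"

lemma holds_Iff[simp]: "holds w n (Iff a b) = (holds w n a \<longleftrightarrow> holds w n b)"
  by (auto simp: Iff_def)

definition EqP :: "nat \<Rightarrow> 'a::finite ltl" where
  "EqP p = Conj (map (\<lambda>q. Iff (LProp q) (Xs p (LProp q))) allAP)"

lemma holds_EqP[simp]: "holds w n (EqP p) = (w n = w (n + p))"
  unfolding EqP_def by auto

definition Char :: "'a::finite trace \<Rightarrow> nat \<Rightarrow> nat \<Rightarrow> 'a ltl" where
  "Char \<pi> i p = LAnd (Conj (map (\<lambda>k. Xs k (Letter (\<pi> k))) [0..<i+p])) (Xs i (Gl (EqP p)))"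

lemma sat_Char: "ltl_sat \<sigma> (Char \<pi> i p) \<longleftrightarrow> (\<forall>k<i+p. \<sigma> k = \<pi> k) \<and> (\<forall>m. \<sigma> (i + m) = \<sigma> (i + m + p))"
  by (auto simp: sat_holds Char_def)

lemma char_unique:
  assumes "0 < p" "\<forall>m. \<pi> (i + m) = \<pi> (i + m + p)"
  shows "ltl_sat \<sigma> (Char \<pi> i p) \<longleftrightarrow> \<sigma> = \<pi>"
proof
  assume "\<sigma> = \<pi>" then show "ltl_sat \<sigma> (Char \<pi> i p)" using assms by (simp add: sat_Char)
next
  assume "ltl_sat \<sigma> (Char \<pi> i p)"
  then have a: "\<forall>k<i+p. \<sigma> k = \<pi> k" and b: "\<forall>m. \<sigma> (i + m) = \<sigma> (i + m + p)"
    by (auto simp: sat_Char)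
  have "\<sigma> n = \<pi> n" for n
  proof (induction n rule: less_induct)
    case (less n)
    show ?case
    proof (cases "n < i + p")
      case True then show ?thesis using a by blast
    next
      case False
      define m where "m = n - p - i"
      have n: "n = i + m + p" using False unfolding m_def by simp
      have "\<sigma> n = \<sigma> (i + m)" using b n by simp
      also have "\<dots> = \<pi> (i + m)" using less n assms(1) by simp
      also have "\<dots> = \<pi> n" using assms(2) n by simp
      finally show ?thesis .
    qed
  qed
  then show "\<sigma> = \<pi>" by blast
qed



lemma buchi_run:
  assumes "is_buchi A" "w \<in> buchi_lang A"
  obtains r where "r 0 \<in> bInit A" "\<forall>n. (r n, w n, r (Suc n)) \<in> bDelta A"
    "infinite {n. r n \<in> bAcc A}" "\<forall>n. r n \<in> bQ A"
proof -
  obtain r where r: "r 0 \<in> bInit A" "\<forall>n. (r n, w n, r (Suc n)) \<in> bDelta A"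
    "infinite {n. r n \<in> bAcc A}" using assms(2) unfolding buchi_lang_def by blast
  have "r n \<in> bQ A" for n
  proof (cases n)
    case 0 then show ?thesis using r assms(1) unfolding is_buchi_def by auto
  next
    case (Suc m)
    have "(r m, w m, r (Suc m)) \<in> bDelta A" using r by blast
    then show ?thesis using Suc assms(1) unfolding is_buchi_def by fastforce
  qed
  then show ?thesis using that r by blast
qed

lemma kripke_run:
  assumes "is_kripke M" "\<pi> \<in> kripke_traces M"
  obtains \<rho> where "\<pi> = (\<lambda>i. kL M (\<rho> i))" "\<rho> 0 \<in> kI M" "\<forall>n. (\<rho> n, \<rho> (Suc n)) \<in> kT M"
    "\<forall>n. \<rho> n \<in> kS M"
proof -
  obtain \<rho> where r: "\<pi> = (\<lambda>i. kL M (\<rho> i))" "\<rho> 0 \<in> kI M" "\<forall>n. (\<rho> n, \<rho> (Suc n)) \<in> kT M"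
    using assms(2) unfolding kripke_traces_def by blast
  have "\<rho> n \<in> kS M" for n
  proof (cases n)
    case 0 then show ?thesis using r assms(1) unfolding is_kripke_def by auto
  next
    case (Suc m)
    have "(\<rho> m, \<rho> (Suc m)) \<in> kT M" using r by blast
    then show ?thesis using Suc assms(1) unfolding is_kripke_def by blast
  qed
  then show ?thesis using that r by blast
qed

lemma lasso_kripke:
  fixes \<pi> :: "'a trace"
  assumes ij: "i < j"
  defines "M \<equiv> \<lparr>kS = {..<j}, kI = {0}, kT = {(x, y). x < j \<and> y = (if Suc x < j then Suc x else i)}, kL = \<pi>\<rparr>"
  shows "is_kripke M" "kripke_traces M = {\<lambda>x. \<pi> (lf i j x)}"
proof -
  show "is_kripke M" unfolding is_kripke_def M_def using ij by auto
  show "kripke_traces M = {\<lambda>x. \<pi> (lf i j x)}"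
  proof
    show "kripke_traces M \<subseteq> {\<lambda>x. \<pi> (lf i j x)}"
    proof
      fix \<sigma> assume "\<sigma> \<in> kripke_traces M"
      then obtain \<rho> where r: "\<sigma> = (\<lambda>x. \<pi> (\<rho> x))" "\<rho> 0 = 0"
        "\<forall>n. \<rho> (Suc n) = (if Suc (\<rho> n) < j then Suc (\<rho> n) else i)"
        unfolding kripke_traces_def M_def by auto
      have "\<rho> n = lf i j n" for n
        by (induction n) (use r lf_0 lf_Suc[OF ij] in auto)
      then show "\<sigma> \<in> {\<lambda>x. \<pi> (lf i j x)}" using r by auto
    qed
    show "{\<lambda>x. \<pi> (lf i j x)} \<subseteq> kripke_traces M"
    proof -
      have "(\<lambda>x. \<pi> (lf i j x)) \<in> kripke_traces M"
        unfolding kripke_traces_def M_def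
        using lf_0 lf_Suc[OF ij] lf_lt[OF ij] by auto
      then show ?thesis by blast
    qed
  qed
qed

theorem mainTheorem14:
  fixes A :: "('q, 'ap::finite) buchi" and A' :: "('q2, 'ap) buchi" and \<phi> :: "'ap ltl"
  assumes "is_buchi A" and "is_buchi A'"
    and "buchi_lang A' = buchi_lang A \<inter> {\<pi>. ltl_sat \<pi> \<phi>}"
  shows "Cn_LTL (supp A \<union> {\<phi>}) = supp A'"
proof
  show "Cn_LTL (supp A \<union> {\<phi>}) \<subseteq> supp A'"
  proof
    fix \<psi> assume cn: "\<psi> \<in> Cn_LTL (supp A \<union> {\<phi>})"
    show "\<psi> \<in> supp A'" unfolding supp_def
    proof (rule CollectI, rule ballI, rule ccontr)
      fix \<pi> assume \<pi>: "\<pi> \<in> buchi_lang A'" and nsat: "\<not> ltl_sat \<pi> \<psi>"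
      obtain r where r: "r 0 \<in> bInit A'" "\<forall>n. (r n, \<pi> n, r (Suc n)) \<in> bDelta A'"
        "infinite {n. r n \<in> bAcc A'}" "\<forall>n. r n \<in> bQ A'"
        using buchi_run[OF assms(2) \<pi>] by blast
      have finQ: "finite (bQ A')" using assms(2) unfolding is_buchi_def by blast
      obtain i j where ij: "i < j"
        and tr: "\<forall>n. (r (lf i j n), \<pi> (lf i j n), r (lf i j (Suc n))) \<in> bDelta A'"
        and acc: "infinite {n. r (lf i j n) \<in> bAcc A'}"
        and sat: "ltl_sat (\<lambda>x. \<pi> (lf i j x)) \<psi> \<longleftrightarrow> ltl_sat \<pi> \<psi>"
        using lasso[OF finQ r(4) r(3), where R="\<lambda>x a y. (x, a, y) \<in> bDelta A'" and w=\<pi> and \<psi>=\<psi>] r(2)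
        by blast
      define \<pi>' where "\<pi>' = (\<lambda>x. \<pi> (lf i j x))"
      have "\<pi>' \<in> buchi_lang A'" unfolding buchi_lang_def \<pi>'_def
        using r(1) tr acc lf_0 by (intro CollectI exI[of _ "\<lambda>x. r (lf i j x)"]) auto
      then have inA: "\<pi>' \<in> buchi_lang A" and satphi: "ltl_sat \<pi>' \<phi>" using assms(3) by auto
      define M :: "(nat, 'ap) kripke" where
        "M = \<lparr>kS = {..<j}, kI = {0}, kT = {(x, y). x < j \<and> y = (if Suc x < j then Suc x else i)}, kL = \<pi>\<rparr>"
      have kM: "is_kripke M" and trM: "kripke_traces M = {\<pi>'}"
        using lasso_kripke[OF ij, of \<pi>] unfolding M_def \<pi>'_def by auto
      have "\<forall>\<phi>'\<in>supp A \<union> {\<phi>}. kripke_models M \<phi>'"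
        using inA satphi trM unfolding kripke_models_def supp_def by auto
      then have "kripke_models M \<psi>" using cn kM unfolding Cn_LTL_def by blast
      then have "ltl_sat \<pi>' \<psi>" using trM unfolding kripke_models_def by auto
      then show False using sat nsat unfolding \<pi>'_def by blast
    qed
  qed
next
  show "supp A' \<subseteq> Cn_LTL (supp A \<union> {\<phi>})"
  proof
    fix \<psi> assume sA': "\<psi> \<in> supp A'"
    show "\<psi> \<in> Cn_LTL (supp A \<union> {\<phi>})" unfolding Cn_LTL_def
    proof (intro CollectI allI impI)
      fix M :: "(nat, 'ap) kripke"
      assume kM: "is_kripke M" and mods: "\<forall>\<phi>'\<in>supp A \<union> {\<phi>}. kripke_models M \<phi>'"
      show "kripke_models M \<psi>" unfolding kripke_models_def
      proof (rule ballI, rule ccontr)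
        fix \<pi> assume \<pi>: "\<pi> \<in> kripke_traces M" and nsat: "\<not> ltl_sat \<pi> \<psi>"
        obtain \<rho> where r: "\<pi> = (\<lambda>i. kL M (\<rho> i))" "\<rho> 0 \<in> kI M" "\<forall>n. (\<rho> n, \<rho> (Suc n)) \<in> kT M"
          "\<forall>n. \<rho> n \<in> kS M" using kripke_run[OF kM \<pi>] by blast
        have finQ: "finite (kS M)" using kM unfolding is_kripke_def by blast
        have infU: "infinite {n. \<rho> n \<in> UNIV}" by simp
        obtain i j where ij: "i < j"
          and tr: "\<forall>n. (\<rho> (lf i j n), \<rho> (lf i j (Suc n))) \<in> kT M"
          and sat: "ltl_sat (\<lambda>x. \<pi> (lf i j x)) \<psi> \<longleftrightarrow> ltl_sat \<pi> \<psi>"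
          using lasso[OF finQ r(4) infU, where R="\<lambda>x a y. (x, y) \<in> kT M" and w=\<pi> and \<psi>=\<psi>] r(3)
          by blast
        define \<pi>' where "\<pi>' = (\<lambda>x. \<pi> (lf i j x))"
        have "\<pi>' \<in> kripke_traces M" unfolding kripke_traces_def \<pi>'_def r(1)
          using r(2) tr lf_0 by (intro CollectI exI[of _ "\<lambda>x. \<rho> (lf i j x)"]) auto
        then have satM: "\<And>\<chi>. kripke_models M \<chi> \<Longrightarrow> ltl_sat \<pi>' \<chi>"
          unfolding kripke_models_def by blast
        have nsat': "\<not> ltl_sat \<pi>' \<psi>" using sat nsat unfolding \<pi>'_def by blast
        have per: "\<forall>m. \<pi>' (i + m) = \<pi>' (i + m + (j - i))"
          unfolding \<pi>'_def using lf_per[OF ij] by simp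
        have p0: "0 < j - i" using ij by simp
        show False
        proof (cases "\<pi>' \<in> buchi_lang A")
          case True
          have "ltl_sat \<pi>' \<phi>" using satM mods by blast
          then have "\<pi>' \<in> buchi_lang A'" using True assms(3) by blast
          then have "ltl_sat \<pi>' \<psi>" using sA' unfolding supp_def by blast
          then show False using nsat' by blast
        next
          case False
          have "LNot (Char \<pi>' i (j - i)) \<in> supp A"
            unfolding supp_def using False char_unique[OF p0 per] by auto
          then have "ltl_sat \<pi>' (LNot (Char \<pi>' i (j - i)))" using satM mods by blast
          then show False using char_unique[OF p0 per] by simp
        qed
      qed
    qed
  qed
qed


end
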